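(* Let $\oplus$ be the functor from $\textnormal{\textbf{Conv}}\times\textnormal{\textbf{Conv}}$ to $\textnormal{\textbf{Conv}}$ which takes pairs of Euclidean spaces $(\mathbb{R}^n,\mathbb{R}^m)$ to their direct sum $\mathbb{R}^n\oplus \mathbb{R}^m$ and takes pairs of bifunctions ($F$ from $\mathbb{R}^m$ to $\mathbb{R}^n$, $G$ from $\mathbb{R}^p$ to $\mathbb{R}^q$) to their pointwise sum, i.e., the bifunction $F\oplus G$ from $\mathbb{R}^m\oplus\mathbb{R}^p$ to $\mathbb{R}^n\oplus\mathbb{R}^q$ given by \begin{multline*} (F\oplus G)((u,y),(x,z)) = F(u,x) + G(y,z) \\ \text{ for all } u\in\mathbb{R}^m,x\in\mathbb{R}^n,y\in\mathbb{R}^p, \textnormal{and } z\in\mathbb{R}^q. \end{multline*} Then $(\textnormal{\textbf{Conv}}, \oplus, \mathbb{R}^0)$ is a strict symmetric monoidal category.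
   Context: $\textnormal{\textbf{Conv}}$ is the category whose objects are Euclidean spaces, whose morphisms from $\mathbb{R}^m$ to $\mathbb{R}^n$ are convex bifunctions, i.e., jointly convex functions $F\colon\mathbb{R}^m\times\mathbb{R}^n\to\mathbb{R}\cup\{\pm\infty\}$, with identity $\mathrm{id}_X(x,x')=0$ if $x=x'$ and $+\infty$ otherwise, and composition $(G\circ F)(u,y)=\inf_{x}\{F(u,x)+G(x,y)\}$. *)

theory Defs
  imports "HOL-Analysis.Analysis"
begin

text \<open>Hom a b is the set of morphisms
from a to b; cmp a b c f g is g after f (f : a -> b, g : b -> c);
otimes is the tensor on objects, tm a b c d f g is the tensor of f : a -> b and
g : c -> d; I is the unit object; brd a b : otimes a b -> otimes b a is the braiding.\<close>

definition strict_sym_monoidal_cat ::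
  "('o \<Rightarrow> 'o \<Rightarrow> 'm set) \<Rightarrow> ('o \<Rightarrow> 'm) \<Rightarrow> ('o \<Rightarrow> 'o \<Rightarrow> 'o \<Rightarrow> 'm \<Rightarrow> 'm \<Rightarrow> 'm)
   \<Rightarrow> ('o \<Rightarrow> 'o \<Rightarrow> 'o) \<Rightarrow> ('o \<Rightarrow> 'o \<Rightarrow> 'o \<Rightarrow> 'o \<Rightarrow> 'm \<Rightarrow> 'm \<Rightarrow> 'm) \<Rightarrow> 'o
   \<Rightarrow> ('o \<Rightarrow> 'o \<Rightarrow> 'm) \<Rightarrow> bool" where
  "strict_sym_monoidal_cat Hom idm cmp otimes tm I brd \<longleftrightarrow>
    \<comment> \<open>category\<close>
    (\<forall>a. idm a \<in> Hom a a) \<and>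
    (\<forall>a b c f g. f \<in> Hom a b \<longrightarrow> g \<in> Hom b c \<longrightarrow> cmp a b c f g \<in> Hom a c) \<and>
    (\<forall>a b f. f \<in> Hom a b \<longrightarrow> cmp a a b (idm a) f = f \<and> cmp a b b f (idm b) = f) \<and>
    (\<forall>a b c d f g h. f \<in> Hom a b \<longrightarrow> g \<in> Hom b c \<longrightarrow> h \<in> Hom c d \<longrightarrow>
        cmp a c d (cmp a b c f g) h = cmp a b d f (cmp b c d g h)) \<and>
    \<comment> \<open>tensor is a bifunctor\<close>
    (\<forall>a b c d f g. f \<in> Hom a b \<longrightarrow> g \<in> Hom c d \<longrightarrow> tm a b c d f g \<in> Hom (otimes a c) (otimes b d)) \<and>
    (\<forall>a c. tm a a c c (idm a) (idm c) = idm (otimes a c)) \<and>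
    (\<forall>a b c a' b' c' f g f' g'. f \<in> Hom a b \<longrightarrow> g \<in> Hom b c \<longrightarrow> f' \<in> Hom a' b' \<longrightarrow> g' \<in> Hom b' c' \<longrightarrow>
        tm a c a' c' (cmp a b c f g) (cmp a' b' c' f' g') =
        cmp (otimes a a') (otimes b b') (otimes c c') (tm a b a' b' f f') (tm b c b' c' g g')) \<and>
    \<comment> \<open>strict monoidal: associativity and unit hold on the nose\<close>
    (\<forall>a b c. otimes (otimes a b) c = otimes a (otimes b c)) \<and>
    (\<forall>a. otimes I a = a \<and> otimes a I = a) \<and>
    (\<forall>a b c d e e' f g h. f \<in> Hom a b \<longrightarrow> g \<in> Hom c d \<longrightarrow> h \<in> Hom e e' \<longrightarrow>
        tm (otimes a c) (otimes b d) e e' (tm a b c d f g) h = tm a b (otimes c e) (otimes d e') f (tm c d e e' g h)) \<and>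
    (\<forall>a b f. f \<in> Hom a b \<longrightarrow> tm I I a b (idm I) f = f \<and> tm a b I I f (idm I) = f) \<and>
    \<comment> \<open>symmetry\<close>
    (\<forall>a b. brd a b \<in> Hom (otimes a b) (otimes b a)) \<and>
    (\<forall>a a' b b' f g. f \<in> Hom a a' \<longrightarrow> g \<in> Hom b b' \<longrightarrow>
        cmp (otimes a b) (otimes a' b') (otimes b' a') (tm a a' b b' f g) (brd a' b') =
        cmp (otimes a b) (otimes b a) (otimes b' a') (brd a b) (tm b b' a a' g f)) \<and>
    (\<forall>a b. cmp (otimes a b) (otimes b a) (otimes a b) (brd a b) (brd b a) = idm (otimes a b)) \<and>
    (\<forall>a b c. brd a (otimes b c) =
        cmp (otimes a (otimes b c)) (otimes b (otimes a c)) (otimes b (otimes c a))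
          (tm (otimes a b) (otimes b a) c c (brd a b) (idm c)) (tm b b (otimes a c) (otimes c a) (idm b) (brd a c))) \<and>
    (\<forall>a b c. brd (otimes a b) c =
        cmp (otimes a (otimes b c)) (otimes a (otimes c b)) (otimes c (otimes a b))
          (tm a a (otimes b c) (otimes c b) (idm a) (brd b c)) (tm (otimes a c) (otimes c a) b b (brd a c) (idm b)))"

text \<open>The Euclidean space R^n is represented by real lists of length n, so the direct
sum R^n (+) R^m is list concatenation (a list of length n+m) and R^0 = {[]}.
A morphism from R^m to R^n is a bifunction F : R^m x R^n -> ereal; outside the
carrier it takes the fixed value undefined (extensionality), so that morphisms
can be compared by equality.  Addition on ereal satisfies inf + (-inf) = inf.\<close>

definition lcomb :: "real \<Rightarrow> real list \<Rightarrow> real list \<Rightarrow> real list" where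
  "lcomb l v w = map2 (\<lambda>a b. l * a + (1 - l) * b) v w"

text \<open>Joint convexity of an extended-real valued bifunction: convexity of its
epigraph {((u,x),t). t real, F u x <= t} in R^m x R^n x R, unfolded.\<close>
definition convex_bifunction :: "nat \<Rightarrow> nat \<Rightarrow> (real list \<Rightarrow> real list \<Rightarrow> ereal) \<Rightarrow> bool" where
  "convex_bifunction m n F \<longleftrightarrow>
    (\<forall>u1 x1 u2 x2 (t1::real) (t2::real) (l::real).
      length u1 = m \<longrightarrow> length u2 = m \<longrightarrow> length x1 = n \<longrightarrow> length x2 = n \<longrightarrow>
      0 \<le> l \<longrightarrow> l \<le> 1 \<longrightarrow> F u1 x1 \<le> ereal t1 \<longrightarrow> F u2 x2 \<le> ereal t2 \<longrightarrow>
      F (lcomb l u1 u2) (lcomb l x1 x2) \<le> ereal (l * t1 + (1 - l) * t2))"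

definition conv_restrict :: "nat \<Rightarrow> nat \<Rightarrow> (real list \<Rightarrow> real list \<Rightarrow> ereal) \<Rightarrow> real list \<Rightarrow> real list \<Rightarrow> ereal" where
  "conv_restrict m n F = (\<lambda>u x. if length u = m \<and> length x = n then F u x else undefined)"

definition conv_hom :: "nat \<Rightarrow> nat \<Rightarrow> (real list \<Rightarrow> real list \<Rightarrow> ereal) set" where
  "conv_hom m n = {F. convex_bifunction m n F \<and>
     (\<forall>u x. \<not> (length u = m \<and> length x = n) \<longrightarrow> F u x = undefined)}"

definition conv_id :: "nat \<Rightarrow> real list \<Rightarrow> real list \<Rightarrow> ereal" where
  "conv_id n = conv_restrict n n (\<lambda>x x'. if x = x' then 0 else \<infinity>)"

definition conv_comp :: "nat \<Rightarrow> nat \<Rightarrow> nat \<Rightarrow> (real list \<Rightarrow> real list \<Rightarrow> ereal)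
    \<Rightarrow> (real list \<Rightarrow> real list \<Rightarrow> ereal) \<Rightarrow> real list \<Rightarrow> real list \<Rightarrow> ereal" where
  "conv_comp m n p F G = conv_restrict m p (\<lambda>u y. INF x\<in>{x. length x = n}. F u x + G x y)"

definition conv_tensor :: "nat \<Rightarrow> nat \<Rightarrow> nat \<Rightarrow> nat \<Rightarrow> (real list \<Rightarrow> real list \<Rightarrow> ereal)
    \<Rightarrow> (real list \<Rightarrow> real list \<Rightarrow> ereal) \<Rightarrow> real list \<Rightarrow> real list \<Rightarrow> ereal" where
  "conv_tensor m n p q F G = conv_restrict (m + p) (n + q)
     (\<lambda>w v. F (take m w) (take n v) + G (drop m w) (drop n v))"

definition conv_sigma :: "nat \<Rightarrow> nat \<Rightarrow> real list \<Rightarrow> real list \<Rightarrow> ereal" where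
  "conv_sigma n m = conv_restrict (n + m) (m + n)
     (\<lambda>w v. if v = drop n w @ take n w then 0 else \<infinity>)"

end

theory Submission
  imports Defs
begin


lemma INF_add_right_ereal:
  fixes f :: "'a \<Rightarrow> ereal"
  assumes "S \<noteq> {}"
  shows "(INF x\<in>S. f x) + c = (INF x\<in>S. f x + c)"
proof (rule antisym)
  show "(INF x\<in>S. f x) + c \<le> (INF x\<in>S. f x + c)"
    by (rule INF_greatest) (intro add_right_mono INF_lower)
next
  show "(INF x\<in>S. f x + c) \<le> (INF x\<in>S. f x) + c"
  proof (cases c)
    case (real r)
    have "(INF x\<in>S. f x + c) - c \<le> (INF x\<in>S. f x)"
    proof (rule INF_greatest)
      fix x assume "x \<in> S"
      then have "(INF x\<in>S. f x + c) \<le> f x + c" by (rule INF_lower)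
      then show "(INF x\<in>S. f x + c) - c \<le> f x" using real
        by (simp add: ereal_minus_le_iff)
    qed
    then have "(INF x\<in>S. f x + c) - c + c \<le> (INF x\<in>S. f x) + c" by (rule add_right_mono)
    moreover have "(INF x\<in>S. f x + c) - c + c = (INF x\<in>S. f x + c)"
      using real by (cases "(INF x\<in>S. f x + c)") auto
    ultimately show ?thesis by simp
  next
    case PInf
    then show ?thesis by simp
  next
    case MInf
    show ?thesis
    proof (cases "(INF x\<in>S. f x) = \<infinity>")
      case True
      then show ?thesis using MInf by simp
    next
      case False
      then have "(INF x\<in>S. f x) < \<infinity>" by (simp add: less_le)
      then obtain x where x: "x \<in> S" "f x < \<infinity>"
        unfolding INF_less_iff by blast
      then have "f x + c = -\<infinity>" using MInf by (cases "f x") auto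
      then have "(INF x\<in>S. f x + c) = -\<infinity>"
        using INF_lower[OF x(1), of "\<lambda>x. f x + c"] by (metis ereal_infty_less_eq2(2))
      then show ?thesis by simp
    qed
  qed
qed

lemma INF_add_left_ereal:
  fixes f :: "'a \<Rightarrow> ereal"
  assumes "S \<noteq> {}"
  shows "c + (INF x\<in>S. f x) = (INF x\<in>S. c + f x)"
  using INF_add_right_ereal[OF assms, of f c] by (simp add: add.commute)

lemma ereal_split:
  fixes A B :: ereal
  assumes "A + B \<le> ereal t"
  shows "\<exists>s r. A \<le> ereal s \<and> B \<le> ereal r \<and> s + r = t"
proof (cases A)
  case (real x)
  then show ?thesis using assms
    by (intro exI[of _ x] exI[of _ "t - x"]) (cases B, auto)
next
  case PInf
  then show ?thesis using assms by simp
next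
  case MInf
  show ?thesis
  proof (cases B)
    case (real y)
    then show ?thesis using MInf by (intro exI[of _ "t - y"] exI[of _ y]) auto
  next
    case PInf
    then show ?thesis using assms MInf by simp
  next
    case MInf': MInf
    then show ?thesis using MInf by (intro exI[of _ t] exI[of _ "0::real"]) auto
  qed
qed

lemma INF_indicator_left:
  fixes g :: "'a \<Rightarrow> ereal"
  assumes "x0 \<in> S" "\<And>x. x \<in> S \<Longrightarrow> P x \<longleftrightarrow> x = x0"
  shows "(INF x\<in>S. (if P x then 0 else \<infinity>) + g x) = g x0"
proof (rule antisym)
  show "(INF x\<in>S. (if P x then 0 else \<infinity>) + g x) \<le> g x0"
    using INF_lower[OF assms(1), of "\<lambda>x. (if P x then 0 else \<infinity>) + g x"] assms by simp
  show "g x0 \<le> (INF x\<in>S. (if P x then 0 else \<infinity>) + g x)"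
    by (rule INF_greatest) (use assms in auto)
qed

lemma INF_indicator_right:
  fixes g :: "'a \<Rightarrow> ereal"
  assumes "x0 \<in> S" "\<And>x. x \<in> S \<Longrightarrow> P x \<longleftrightarrow> x = x0"
  shows "(INF x\<in>S. g x + (if P x then 0 else \<infinity>)) = g x0"
  using INF_indicator_left[OF assms, of g] by (simp add: add.commute)



lemma length_lcomb[simp]: "length (lcomb l v w) = min (length v) (length w)"
  by (simp add: lcomb_def)
lemma take_lcomb: "take n (lcomb l v w) = lcomb l (take n v) (take n w)"
  by (simp add: lcomb_def take_map take_zip)
lemma drop_lcomb: "drop n (lcomb l v w) = lcomb l (drop n v) (drop n w)"
  by (simp add: lcomb_def drop_map drop_zip)
lemma lcomb_append: "length a = length c \<Longrightarrow> lcomb l (a @ b) (c @ d) = lcomb l a c @ lcomb l b d"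
  by (simp add: lcomb_def zip_append)

lemma homD: "F \<in> conv_hom m n \<Longrightarrow> convex_bifunction m n F"
  "F \<in> conv_hom m n \<Longrightarrow> \<not> (length u = m \<and> length x = n) \<Longrightarrow> F u x = undefined"
  by (auto simp: conv_hom_def)

lemma restrict_in_hom:
  assumes "convex_bifunction m n F" shows "conv_restrict m n F \<in> conv_hom m n"
  using assms unfolding conv_hom_def convex_bifunction_def conv_restrict_def by auto

lemma convexD:
  assumes "convex_bifunction m n F" "length u1 = m" "length u2 = m" "length x1 = n" "length x2 = n"
    "0 \<le> l" "l \<le> 1" "F u1 x1 \<le> ereal t1" "F u2 x2 \<le> ereal t2"
  shows "F (lcomb l u1 u2) (lcomb l x1 x2) \<le> ereal (l * t1 + (1 - l) * t2)"
  using assms unfolding convex_bifunction_def by blast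

lemma id_hom: "conv_id n \<in> conv_hom n n"
  unfolding conv_id_def
proof (rule restrict_in_hom)
  show "convex_bifunction n n (\<lambda>x x'. if x = x' then 0 else \<infinity>)"
    unfolding convex_bifunction_def
  proof (intro allI impI)
    fix u1 x1 u2 x2 :: "real list" and t1 t2 l :: real
    assume h: "0 \<le> l" "l \<le> 1" "(if u1 = x1 then 0 else \<infinity>) \<le> ereal t1"
      "(if u2 = x2 then 0 else (\<infinity>::ereal)) \<le> ereal t2"
    then have "u1 = x1" "u2 = x2" "0 \<le> t1" "0 \<le> t2" by (auto split: if_splits)
    moreover have "0 \<le> l * t1 + (1 - l) * t2" using h calculation by simp
    ultimately show "(if lcomb l u1 u2 = lcomb l x1 x2 then 0 else \<infinity>) \<le> ereal (l * t1 + (1 - l) * t2)"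
      by simp
  qed
qed

lemma sigma_hom: "conv_sigma n m \<in> conv_hom (n + m) (m + n)"
  unfolding conv_sigma_def
proof (rule restrict_in_hom)
  show "convex_bifunction (n + m) (m + n) (\<lambda>w v. if v = drop n w @ take n w then 0 else \<infinity>)"
    unfolding convex_bifunction_def
  proof (intro allI impI)
    fix u1 x1 u2 x2 :: "real list" and t1 t2 l :: real
    assume h: "length u1 = n + m" "length u2 = n + m" "0 \<le> l" "l \<le> 1"
      "(if x1 = drop n u1 @ take n u1 then 0 else \<infinity>) \<le> ereal t1"
      "(if x2 = drop n u2 @ take n u2 then 0 else (\<infinity>::ereal)) \<le> ereal t2"
    then have e: "x1 = drop n u1 @ take n u1" "x2 = drop n u2 @ take n u2" "0 \<le> t1" "0 \<le> t2"
      by (auto split: if_splits)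
    have "lcomb l x1 x2 = drop n (lcomb l u1 u2) @ take n (lcomb l u1 u2)"
      using h(1,2) by (simp add: e take_lcomb drop_lcomb lcomb_append)
    moreover have "0 \<le> l * t1 + (1 - l) * t2" using h e by simp
    ultimately show "(if lcomb l x1 x2 = drop n (lcomb l u1 u2) @ take n (lcomb l u1 u2) then 0 else \<infinity>)
       \<le> ereal (l * t1 + (1 - l) * t2)"
      by simp
  qed
qed

lemma ereal_sum_bound:
  fixes A B :: ereal
  assumes "A \<le> ereal (l * s1 + (1 - l) * s2)" "B \<le> ereal (l * r1 + (1 - l) * r2)"
    "s1 + r1 = t1" "s2 + r2 = t2"
  shows "A + B \<le> ereal (l * t1 + (1 - l) * t2)"
proof -
  have "A + B \<le> ereal (l * s1 + (1 - l) * s2) + ereal (l * r1 + (1 - l) * r2)"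
    using assms by (intro add_mono) auto
  also have "\<dots> = ereal (l * t1 + (1 - l) * t2)"
    using assms(3,4) by (simp add: algebra_simps flip: assms(3,4))
  finally show ?thesis .
qed

lemma tensor_hom:
  assumes F: "F \<in> conv_hom m n" and G: "G \<in> conv_hom p q"
  shows "conv_tensor m n p q F G \<in> conv_hom (m + p) (n + q)"
  unfolding conv_tensor_def
proof (rule restrict_in_hom)
  show "convex_bifunction (m + p) (n + q) (\<lambda>w v. F (take m w) (take n v) + G (drop m w) (drop n v))"
    unfolding convex_bifunction_def
  proof (intro allI impI)
    fix u1 x1 u2 x2 :: "real list" and t1 t2 l :: real
    assume h: "length u1 = m + p" "length u2 = m + p" "length x1 = n + q" "length x2 = n + q"
      "0 \<le> l" "l \<le> 1"
      "F (take m u1) (take n x1) + G (drop m u1) (drop n x1) \<le> ereal t1"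
      "F (take m u2) (take n x2) + G (drop m u2) (drop n x2) \<le> ereal t2"
    obtain s1 r1 where 1: "F (take m u1) (take n x1) \<le> ereal s1" "G (drop m u1) (drop n x1) \<le> ereal r1" "s1 + r1 = t1"
      using ereal_split[OF h(7)] by blast
    obtain s2 r2 where 2: "F (take m u2) (take n x2) \<le> ereal s2" "G (drop m u2) (drop n x2) \<le> ereal r2" "s2 + r2 = t2"
      using ereal_split[OF h(8)] by blast
    have a: "F (lcomb l (take m u1) (take m u2)) (lcomb l (take n x1) (take n x2)) \<le> ereal (l * s1 + (1 - l) * s2)"
      by (rule convexD[OF homD(1)[OF F]]) (use h 1 2 in auto)
    have b: "G (lcomb l (drop m u1) (drop m u2)) (lcomb l (drop n x1) (drop n x2)) \<le> ereal (l * r1 + (1 - l) * r2)"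
      by (rule convexD[OF homD(1)[OF G]]) (use h 1 2 in auto)
    show "F (take m (lcomb l u1 u2)) (take n (lcomb l x1 x2)) + G (drop m (lcomb l u1 u2)) (drop n (lcomb l x1 x2))
       \<le> ereal (l * t1 + (1 - l) * t2)"
      unfolding take_lcomb drop_lcomb by (rule ereal_sum_bound[OF a b 1(3) 2(3)])
  qed
qed


lemma comp_hom:
  assumes F: "F \<in> conv_hom m n" and G: "G \<in> conv_hom n p"
  shows "conv_comp m n p F G \<in> conv_hom m p"
  unfolding conv_comp_def
proof (rule restrict_in_hom)
  show "convex_bifunction m p (\<lambda>u y. INF x\<in>{x. length x = n}. F u x + G x y)"
    unfolding convex_bifunction_def
  proof (intro allI impI)
    fix u1 y1 u2 y2 :: "real list" and t1 t2 l :: real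
    assume h: "length u1 = m" "length u2 = m" "length y1 = p" "length y2 = p"
      "0 \<le> l" "l \<le> 1"
      "(INF x\<in>{x. length x = n}. F u1 x + G x y1) \<le> ereal t1"
      "(INF x\<in>{x. length x = n}. F u2 x + G x y2) \<le> ereal t2"
    show "(INF x\<in>{x. length x = n}. F (lcomb l u1 u2) x + G x (lcomb l y1 y2)) \<le> ereal (l * t1 + (1 - l) * t2)"
    proof (rule ereal_le_epsilon2)
      fix e :: real assume e: "0 < e"
      have "(INF x\<in>{x. length x = n}. F u1 x + G x y1) < ereal (t1 + e)"
        by (rule le_less_trans[OF h(7)]) (use e in simp)
      then obtain x1 where x1: "length x1 = n" "F u1 x1 + G x1 y1 < ereal (t1 + e)"
        unfolding INF_less_iff mem_Collect_eq by blast
      have "(INF x\<in>{x. length x = n}. F u2 x + G x y2) < ereal (t2 + e)"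
        by (rule le_less_trans[OF h(8)]) (use e in simp)
      then obtain x2 where x2: "length x2 = n" "F u2 x2 + G x2 y2 < ereal (t2 + e)"
        unfolding INF_less_iff mem_Collect_eq by blast
      obtain s1 r1 where 1: "F u1 x1 \<le> ereal s1" "G x1 y1 \<le> ereal r1" "s1 + r1 = t1 + e"
        using ereal_split[OF less_imp_le[OF x1(2)]] by blast
      obtain s2 r2 where 2: "F u2 x2 \<le> ereal s2" "G x2 y2 \<le> ereal r2" "s2 + r2 = t2 + e"
        using ereal_split[OF less_imp_le[OF x2(2)]] by blast
      have a: "F (lcomb l u1 u2) (lcomb l x1 x2) \<le> ereal (l * s1 + (1 - l) * s2)"
        by (rule convexD[OF homD(1)[OF F]]) (use h 1 2 x1 x2 in simp_all)
      have b: "G (lcomb l x1 x2) (lcomb l y1 y2) \<le> ereal (l * r1 + (1 - l) * r2)"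
        by (rule convexD[OF homD(1)[OF G]]) (use h 1 2 x1 x2 in simp_all)
      have "(INF x\<in>{x. length x = n}. F (lcomb l u1 u2) x + G x (lcomb l y1 y2))
          \<le> F (lcomb l u1 u2) (lcomb l x1 x2) + G (lcomb l x1 x2) (lcomb l y1 y2)"
        by (rule INF_lower) (simp add: x1 x2)
      also have "\<dots> \<le> ereal (l * (t1 + e) + (1 - l) * (t2 + e))"
        by (rule ereal_sum_bound[OF a b 1(3) 2(3)])
      also have "\<dots> = ereal (l * t1 + (1 - l) * t2) + ereal e"
      proof -
        have "l * (t1 + e) + (1 - l) * (t2 + e) = (l * t1 + (1 - l) * t2) + e"
          by algebra
        then show ?thesis by simp
      qed
      finally show "(INF x\<in>{x. length x = n}. F (lcomb l u1 u2) x + G x (lcomb l y1 y2))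
          \<le> ereal (l * t1 + (1 - l) * t2) + ereal e" .
    qed
  qed
qed



lemma len_ne: "{x::real list. length x = n} \<noteq> {}"
  by (metis (mono_tags) empty_iff length_replicate mem_Collect_eq)

lemma ind_add: "(if P then 0 else \<infinity>) + (if Q then 0 else \<infinity>) = (if P \<and> Q then 0 else (\<infinity>::ereal))"
  by simp

lemma restrict_out: "\<not> (length u = m \<and> length x = n) \<Longrightarrow> conv_restrict m n F u x = undefined"
  unfolding conv_restrict_def by auto

lemma comp_id_left:
  assumes f: "f \<in> conv_hom a b" shows "conv_comp a a b (conv_id a) f = f"
proof (intro ext)
  fix u y
  show "conv_comp a a b (conv_id a) f u y = f u y"
  proof (cases "length u = a \<and> length y = b")
    case True
    have "conv_comp a a b (conv_id a) f u y = (INF x\<in>{x. length x = a}. conv_id a u x + f x y)"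
      using True by (simp add: conv_comp_def conv_restrict_def)
    also have "\<dots> = (INF x\<in>{x. length x = a}. (if x = u then 0 else \<infinity>) + f x y)"
      by (rule INF_cong) (use True in \<open>auto simp: conv_id_def conv_restrict_def\<close>)
    also have "\<dots> = f u y"
      by (rule INF_indicator_left) (use True in auto)
    finally show ?thesis .
  next
    case False
    then show ?thesis using homD(2)[OF f False] by (simp only: conv_comp_def restrict_out[OF False])
  qed
qed

lemma comp_id_right:
  assumes f: "f \<in> conv_hom a b" shows "conv_comp a b b f (conv_id b) = f"
proof (intro ext)
  fix u y
  show "conv_comp a b b f (conv_id b) u y = f u y"
  proof (cases "length u = a \<and> length y = b")
    case True
    have "conv_comp a b b f (conv_id b) u y = (INF x\<in>{x. length x = b}. f u x + conv_id b x y)"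
      using True by (simp add: conv_comp_def conv_restrict_def)
    also have "\<dots> = (INF x\<in>{x. length x = b}. f u x + (if x = y then 0 else \<infinity>))"
      by (rule INF_cong) (use True in \<open>auto simp: conv_id_def conv_restrict_def\<close>)
    also have "\<dots> = f u y"
      by (rule INF_indicator_right) (use True in auto)
    finally show ?thesis .
  next
    case False
    then show ?thesis using homD(2)[OF f False] by (simp only: conv_comp_def restrict_out[OF False])
  qed
qed

lemma comp_assoc:
  assumes f: "f \<in> conv_hom a b" and g: "g \<in> conv_hom b c" and h: "h \<in> conv_hom c d"
  shows "conv_comp a c d (conv_comp a b c f g) h = conv_comp a b d f (conv_comp b c d g h)"
proof (intro ext)
  fix u z
  show "conv_comp a c d (conv_comp a b c f g) h u z = conv_comp a b d f (conv_comp b c d g h) u z"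
  proof (cases "length u = a \<and> length z = d")
    case True
    let ?B = "{x::real list. length x = b}" and ?C = "{x::real list. length x = c}"
    have "conv_comp a c d (conv_comp a b c f g) h u z = (INF y\<in>?C. (INF x\<in>?B. f u x + g x y) + h y z)"
      using True by (simp add: conv_comp_def conv_restrict_def)
    also have "\<dots> = (INF y\<in>?C. INF x\<in>?B. f u x + g x y + h y z)"
      by (rule INF_cong[OF refl]) (rule INF_add_right_ereal[OF len_ne])
    also have "\<dots> = (INF x\<in>?B. INF y\<in>?C. f u x + (g x y + h y z))"
      by (subst INF_commute) (simp add: add.assoc)
    also have "\<dots> = (INF x\<in>?B. f u x + (INF y\<in>?C. g x y + h y z))"
      by (rule INF_cong[OF refl]) (rule INF_add_left_ereal[OF len_ne, symmetric])
    also have "\<dots> = conv_comp a b d f (conv_comp b c d g h) u z"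
      using True by (simp add: conv_comp_def conv_restrict_def)
    finally show ?thesis .
  next
    case False
    then show ?thesis by (simp only: conv_comp_def restrict_out[OF False])
  qed
qed

lemma tensor_id: "conv_tensor a a c c (conv_id a) (conv_id c) = conv_id (a + c)"
proof (intro ext)
  fix w v :: "real list"
  show "conv_tensor a a c c (conv_id a) (conv_id c) w v = conv_id (a + c) w v"
  proof (cases "length w = a + c \<and> length v = a + c")
    case True
    have "(take a w = take a v \<and> drop a w = drop a v) \<longleftrightarrow> w = v"
      by (metis append_take_drop_id)
    then show ?thesis using True
      by (simp add: conv_tensor_def conv_id_def conv_restrict_def ind_add)
  next
    case False
    then show ?thesis by (simp only: conv_tensor_def conv_id_def restrict_out[OF False])
  qed
qed

lemma INF_split_list:
  fixes P :: "real list \<Rightarrow> real list \<Rightarrow> ereal"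
  shows "(INF y\<in>{y. length y = n + m}. P (take n y) (drop n y)) =
    (INF x\<in>{x. length x = n}. INF x'\<in>{x'. length x' = m}. P x x')"
proof (rule antisym)
  show "(INF y\<in>{y. length y = n + m}. P (take n y) (drop n y)) \<le>
    (INF x\<in>{x. length x = n}. INF x'\<in>{x'. length x' = m}. P x x')"
  proof (intro INF_greatest)
    fix x x' :: "real list" assume "x \<in> {x. length x = n}" "x' \<in> {x'. length x' = m}"
    then show "(INF y\<in>{y. length y = n + m}. P (take n y) (drop n y)) \<le> P x x'"
      using INF_lower[of "x @ x'" "{y. length y = n + m}" "\<lambda>y. P (take n y) (drop n y)"] by simp
  qed
  show "(INF x\<in>{x. length x = n}. INF x'\<in>{x'. length x' = m}. P x x') \<le>
    (INF y\<in>{y. length y = n + m}. P (take n y) (drop n y))"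
  proof (rule INF_greatest)
    fix y :: "real list" assume y: "y \<in> {y. length y = n + m}"
    show "(INF x\<in>{x. length x = n}. INF x'\<in>{x'. length x' = m}. P x x') \<le> P (take n y) (drop n y)"
      by (rule INF_lower2[of "take n y"]) (use y in \<open>auto intro!: INF_lower2[of "drop n y"]\<close>)
  qed
qed

lemma tensor_interchange:
  assumes f: "f \<in> conv_hom a b" and g: "g \<in> conv_hom b c"
    and f': "f' \<in> conv_hom a' b'" and g': "g' \<in> conv_hom b' c'"
  shows "conv_tensor a c a' c' (conv_comp a b c f g) (conv_comp a' b' c' f' g') =
    conv_comp (a + a') (b + b') (c + c') (conv_tensor a b a' b' f f') (conv_tensor b c b' c' g g')"
proof (intro ext)
  fix w v :: "real list"
  show "conv_tensor a c a' c' (conv_comp a b c f g) (conv_comp a' b' c' f' g') w v =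
    conv_comp (a + a') (b + b') (c + c') (conv_tensor a b a' b' f f') (conv_tensor b c b' c' g g') w v"
  proof (cases "length w = a + a' \<and> length v = c + c'")
    case True
    let ?B = "{x::real list. length x = b}" and ?B' = "{x::real list. length x = b'}"
    let ?P = "\<lambda>x x'. (f (take a w) x + f' (drop a w) x') + (g x (take c v) + g' x' (drop c v))"
    have "conv_tensor a c a' c' (conv_comp a b c f g) (conv_comp a' b' c' f' g') w v =
      (INF x\<in>?B. f (take a w) x + g x (take c v)) + (INF x'\<in>?B'. f' (drop a w) x' + g' x' (drop c v))"
      using True by (simp add: conv_tensor_def conv_comp_def conv_restrict_def)
    also have "\<dots> = (INF x\<in>?B. (f (take a w) x + g x (take c v)) + (INF x'\<in>?B'. f' (drop a w) x' + g' x' (drop c v)))"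
      by (rule INF_add_right_ereal[OF len_ne])
    also have "\<dots> = (INF x\<in>?B. INF x'\<in>?B'. ?P x x')"
      by (rule INF_cong[OF refl], subst INF_add_left_ereal[OF len_ne]) (simp add: ac_simps)
    also have "\<dots> = (INF y\<in>{y. length y = b + b'}. ?P (take b y) (drop b y))"
      by (rule INF_split_list[symmetric])
    also have "\<dots> = conv_comp (a + a') (b + b') (c + c') (conv_tensor a b a' b' f f') (conv_tensor b c b' c' g g') w v"
      using True by (simp add: conv_tensor_def conv_comp_def conv_restrict_def)
    finally show ?thesis .
  next
    case False
    then show ?thesis by (simp only: conv_tensor_def conv_comp_def restrict_out[OF False])
  qed
qed



lemma split3:
  assumes "length w = a + c + e"
  obtains p q r where "w = p @ q @ r" "length p = a" "length q = c" "length r = e"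
proof -
  have "w = take a w @ take c (drop a w) @ drop c (drop a w)" by (simp only: append_take_drop_id)
  then show thesis by (rule that) (use assms in auto)
qed

lemma tensor_assoc:
  assumes f: "f \<in> conv_hom a b" and g: "g \<in> conv_hom c d" and h: "h \<in> conv_hom e e'"
  shows "conv_tensor (a + c) (b + d) e e' (conv_tensor a b c d f g) h =
    conv_tensor a b (c + e) (d + e') f (conv_tensor c d e e' g h)"
proof (intro ext)
  fix w v :: "real list"
  show "conv_tensor (a + c) (b + d) e e' (conv_tensor a b c d f g) h w v =
    conv_tensor a b (c + e) (d + e') f (conv_tensor c d e e' g h) w v"
  proof (cases "length w = a + c + e \<and> length v = b + d + e'")
    case True
    obtain p q r where w: "w = p @ q @ r" "length p = a" "length q = c" "length r = e"
      using True split3 by metis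
    obtain x y z where v: "v = x @ y @ z" "length x = b" "length y = d" "length z = e'"
      using True split3 by metis
    show ?thesis
      unfolding w v using w(2-4) v(2-4) by (simp add: conv_tensor_def conv_restrict_def add.assoc)
  next
    case False
    then have F2: "\<not> (length w = a + (c + e) \<and> length v = b + (d + e'))" by (simp add: add.assoc)
    show ?thesis by (simp only: conv_tensor_def restrict_out[OF False] restrict_out[OF F2])
  qed
qed

lemma tensor_unit:
  assumes f: "f \<in> conv_hom a b"
  shows "conv_tensor 0 0 a b (conv_id 0) f = f" "conv_tensor a b 0 0 f (conv_id 0) = f"
proof -
  show "conv_tensor 0 0 a b (conv_id 0) f = f"
  proof (intro ext)
    fix w v :: "real list"
    show "conv_tensor 0 0 a b (conv_id 0) f w v = f w v"
    proof (cases "length w = a \<and> length v = b")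
      case True
      then show ?thesis by (simp add: conv_tensor_def conv_id_def conv_restrict_def)
    next
      case False
      then have F2: "\<not> (length w = 0 + a \<and> length v = 0 + b)" by simp
      show ?thesis using homD(2)[OF f False] by (simp only: conv_tensor_def restrict_out[OF F2])
    qed
  qed
  show "conv_tensor a b 0 0 f (conv_id 0) = f"
  proof (intro ext)
    fix w v :: "real list"
    show "conv_tensor a b 0 0 f (conv_id 0) w v = f w v"
    proof (cases "length w = a \<and> length v = b")
      case True
      then show ?thesis by (simp add: conv_tensor_def conv_id_def conv_restrict_def)
    next
      case False
      then have F2: "\<not> (length w = a + 0 \<and> length v = b + 0)" by simp
      show ?thesis using homD(2)[OF f False] by (simp only: conv_tensor_def restrict_out[OF F2])
    qed
  qed
qed

lemma swap_iff:
  assumes "length y = n + m" "length v = m + n"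
  shows "(v = drop n y @ take n y) \<longleftrightarrow> (y = drop m v @ take m v)"
  using assms by (auto simp: min_def)


lemma brd_natural:
  assumes f: "f \<in> conv_hom a a'" and g: "g \<in> conv_hom b b'"
  shows "conv_comp (a + b) (a' + b') (b' + a') (conv_tensor a a' b b' f g) (conv_sigma a' b') =
    conv_comp (a + b) (b + a) (b' + a') (conv_sigma a b) (conv_tensor b b' a a' g f)"
proof (intro ext)
  fix w v :: "real list"
  show "conv_comp (a + b) (a' + b') (b' + a') (conv_tensor a a' b b' f g) (conv_sigma a' b') w v =
    conv_comp (a + b) (b + a) (b' + a') (conv_sigma a b) (conv_tensor b b' a a' g f) w v"
  proof (cases "length w = a + b \<and> length v = b' + a'")
    case True
    let ?y0 = "drop b' v @ take b' v"
    have "conv_comp (a + b) (a' + b') (b' + a') (conv_tensor a a' b b' f g) (conv_sigma a' b') w v =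
      (INF y\<in>{y. length y = a' + b'}. conv_tensor a a' b b' f g w y + conv_sigma a' b' y v)"
      using True by (simp add: conv_comp_def conv_restrict_def)
    also have "\<dots> = (INF y\<in>{y. length y = a' + b'}. (f (take a w) (take a' y) + g (drop a w) (drop a' y)) +
         (if v = drop a' y @ take a' y then 0 else \<infinity>))"
      using True by (intro INF_cong) (auto simp: conv_tensor_def conv_sigma_def conv_restrict_def)
    also have "\<dots> = f (take a w) (take a' ?y0) + g (drop a w) (drop a' ?y0)"
      by (rule INF_indicator_right) (use True swap_iff in auto)
    also have "\<dots> = f (take a w) (drop b' v) + g (drop a w) (take b' v)"
      using True by simp
    also have "\<dots> = (INF y\<in>{y. length y = b + a}. (if y = drop a w @ take a w then 0 else \<infinity>) +
         (g (take b y) (take b' v) + f (drop b y) (drop b' v)))"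
    proof -
      let ?z0 = "drop a w @ take a w"
      have "(INF y\<in>{y. length y = b + a}. (if y = drop a w @ take a w then 0 else \<infinity>) +
         (g (take b y) (take b' v) + f (drop b y) (drop b' v))) = g (take b ?z0) (take b' v) + f (drop b ?z0) (drop b' v)"
        by (rule INF_indicator_left) (use True in auto)
      then show ?thesis using True by (simp add: add.commute)
    qed
    also have "\<dots> = (INF y\<in>{y. length y = b + a}. conv_sigma a b w y + conv_tensor b b' a a' g f y v)"
      using True by (intro INF_cong) (auto simp: conv_tensor_def conv_sigma_def conv_restrict_def)
    also have "\<dots> = conv_comp (a + b) (b + a) (b' + a') (conv_sigma a b) (conv_tensor b b' a a' g f) w v"
      using True by (simp add: conv_comp_def conv_restrict_def)
    finally show ?thesis .
  next
    case False
    then show ?thesis by (simp only: conv_comp_def restrict_out[OF False])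
  qed
qed

lemma brd_inv: "conv_comp (a + b) (b + a) (a + b) (conv_sigma a b) (conv_sigma b a) = conv_id (a + b)"
proof (intro ext)
  fix w v :: "real list"
  show "conv_comp (a + b) (b + a) (a + b) (conv_sigma a b) (conv_sigma b a) w v = conv_id (a + b) w v"
  proof (cases "length w = a + b \<and> length v = a + b")
    case True
    let ?y0 = "drop a w @ take a w"
    have "conv_comp (a + b) (b + a) (a + b) (conv_sigma a b) (conv_sigma b a) w v =
      (INF y\<in>{y. length y = b + a}. conv_sigma a b w y + conv_sigma b a y v)"
      using True by (simp add: conv_comp_def conv_restrict_def)
    also have "\<dots> = (INF y\<in>{y. length y = b + a}. (if y = drop a w @ take a w then 0 else \<infinity>) +
         (if v = drop b y @ take b y then 0 else \<infinity>))"
      using True by (intro INF_cong) (auto simp: conv_sigma_def conv_restrict_def)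
    also have "\<dots> = (if v = drop b ?y0 @ take b ?y0 then 0 else \<infinity>)"
      by (rule INF_indicator_left) (use True in auto)
    also have "\<dots> = conv_id (a + b) w v"
      using True by (auto simp: conv_id_def conv_restrict_def)
    finally show ?thesis .
  next
    case False
    then show ?thesis by (simp only: conv_comp_def conv_id_def restrict_out[OF False])
  qed
qed



lemma hex1:
  "conv_sigma a (b + c) =
   conv_comp (a + (b + c)) (b + (a + c)) (b + (c + a))
     (conv_tensor (a + b) (b + a) c c (conv_sigma a b) (conv_id c))
     (conv_tensor b b (a + c) (c + a) (conv_id b) (conv_sigma a c))"
proof (intro ext)
  fix w v :: "real list"
  let ?T1 = "conv_tensor (a + b) (b + a) c c (conv_sigma a b) (conv_id c)"
  let ?T2 = "conv_tensor b b (a + c) (c + a) (conv_id b) (conv_sigma a c)"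
  show "conv_sigma a (b + c) w v = conv_comp (a + (b + c)) (b + (a + c)) (b + (c + a)) ?T1 ?T2 w v"
  proof (cases "length w = a + (b + c) \<and> length v = b + (c + a)")
    case True
    obtain p q r where w: "w = p @ q @ r" "length p = a" "length q = b" "length r = c"
      using True split3[of w a b c] by (metis add.assoc)
    obtain x y z where v: "v = x @ y @ z" "length x = b" "length y = c" "length z = a"
      using True split3[of v b c a] by (metis add.assoc)
    have T1: "?T1 w t = (if t = q @ p @ r then 0 else \<infinity>)" if t: "length t = b + (a + c)" for t
    proof -
      obtain t1 t2 t3 where t3: "t = t1 @ t2 @ t3" "length t1 = b" "length t2 = a" "length t3 = c"
        using t split3[of t b a c] by (metis add.assoc)
      show ?thesis unfolding w t3 using w(2-4) t3(2-4)
        by (simp add: conv_tensor_def conv_sigma_def conv_id_def conv_restrict_def)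
    qed
    have "conv_comp (a + (b + c)) (b + (a + c)) (b + (c + a)) ?T1 ?T2 w v =
      (INF t\<in>{t. length t = b + (a + c)}. ?T1 w t + ?T2 t v)"
      using True by (simp add: conv_comp_def conv_restrict_def)
    also have "\<dots> = (INF t\<in>{t. length t = b + (a + c)}. (if t = q @ p @ r then 0 else \<infinity>) + ?T2 t v)"
      by (rule INF_cong) (simp_all add: T1)
    also have "\<dots> = ?T2 (q @ p @ r) v"
      by (rule INF_indicator_left) (use w in auto)
    also have "\<dots> = conv_sigma a (b + c) w v"
      unfolding w v using w(2-4) v(2-4)
      by (simp add: conv_tensor_def conv_sigma_def conv_id_def conv_restrict_def)
    finally show ?thesis ..
  next
    case False
    then have F2: "\<not> (length w = a + (b + c) \<and> length v = b + c + a)" by (simp add: ac_simps)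
    show ?thesis by (simp only: conv_comp_def conv_sigma_def restrict_out[OF False] restrict_out[OF F2])
  qed
qed

lemma hex2:
  "conv_sigma (a + b) c =
   conv_comp (a + (b + c)) (a + (c + b)) (c + (a + b))
     (conv_tensor a a (b + c) (c + b) (conv_id a) (conv_sigma b c))
     (conv_tensor (a + c) (c + a) b b (conv_sigma a c) (conv_id b))"
proof (intro ext)
  fix w v :: "real list"
  let ?T1 = "conv_tensor a a (b + c) (c + b) (conv_id a) (conv_sigma b c)"
  let ?T2 = "conv_tensor (a + c) (c + a) b b (conv_sigma a c) (conv_id b)"
  show "conv_sigma (a + b) c w v = conv_comp (a + (b + c)) (a + (c + b)) (c + (a + b)) ?T1 ?T2 w v"
  proof (cases "length w = a + (b + c) \<and> length v = c + (a + b)")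
    case True
    obtain p q r where w: "w = p @ q @ r" "length p = a" "length q = b" "length r = c"
      using True split3[of w a b c] by (metis add.assoc)
    obtain x y z where v: "v = x @ y @ z" "length x = c" "length y = a" "length z = b"
      using True split3[of v c a b] by (metis add.assoc)
    have T1: "?T1 w t = (if t = p @ r @ q then 0 else \<infinity>)" if t: "length t = a + (c + b)" for t
    proof -
      obtain t1 t2 t3 where t3: "t = t1 @ t2 @ t3" "length t1 = a" "length t2 = c" "length t3 = b"
        using t split3[of t a c b] by (metis add.assoc)
      show ?thesis unfolding w t3 using w(2-4) t3(2-4)
        by (simp add: conv_tensor_def conv_sigma_def conv_id_def conv_restrict_def)
    qed
    have "conv_comp (a + (b + c)) (a + (c + b)) (c + (a + b)) ?T1 ?T2 w v =
      (INF t\<in>{t. length t = a + (c + b)}. ?T1 w t + ?T2 t v)"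
      using True by (simp add: conv_comp_def conv_restrict_def)
    also have "\<dots> = (INF t\<in>{t. length t = a + (c + b)}. (if t = p @ r @ q then 0 else \<infinity>) + ?T2 t v)"
      by (rule INF_cong) (simp_all add: T1)
    also have "\<dots> = ?T2 (p @ r @ q) v"
      by (rule INF_indicator_left) (use w in auto)
    also have "\<dots> = conv_sigma (a + b) c w v"
      unfolding w v using w(2-4) v(2-4)
      by (simp add: conv_tensor_def conv_sigma_def conv_id_def conv_restrict_def)
    finally show ?thesis ..
  next
    case False
    then have F2: "\<not> (length w = a + b + c \<and> length v = c + (a + b))" by (simp add: ac_simps)
    show ?thesis by (simp only: conv_comp_def conv_sigma_def restrict_out[OF False] restrict_out[OF F2])
  qed
qed


theorem mainTheorem2:
  shows "strict_sym_monoidal_cat conv_hom conv_id conv_comp (+) conv_tensor 0 conv_sigma"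
  unfolding strict_sym_monoidal_cat_def
  by (intro conjI allI impI)
    (simp_all add: id_hom comp_hom comp_id_left comp_id_right comp_assoc tensor_hom tensor_id
      tensor_interchange tensor_assoc tensor_unit sigma_hom brd_natural brd_inv hex1 hex2 add.assoc)

end
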